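(* Let $\epsilon>0$ and let $\Lambda_\epsilon\subset\mathbb{R}^d$ be an $\epsilon$-lattice. Then every $\mathbf{x}\in\mathbb{R}^d$ lies in the convex hull of $B_{7\epsilon}(\mathbf{x})\cap\Lambda_\epsilon$.
   Context: $\|\cdot\|$ is a fixed one of the $\ell_1,\ell_2,\ell_\infty$ norms and $B_r(\mathbf{x})=\{\mathbf{z}:\|\mathbf{z}-\mathbf{x}\|\le r\}$. A lattice is the set of integer combinations of a basis of $\mathbb{R}^d$. Its packing radius $r_p$ is the supremum of $r$ such that balls of radius $r$ around distinct lattice points are disjoint; its cover radius $r_c$ is the infimum of $r$ such that balls of radius $r$ around lattice points cover $\mathbb{R}^d$. An $\epsilon$-lattice is a lattice with $\epsilon=r_p\le r_c\le3\epsilon$. *)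

theory Defs
  imports "HOL-Analysis.Analysis"
begin

datatype normkind = L1 | L2 | Linf

definition pnorm :: "normkind \<Rightarrow> real^'n \<Rightarrow> real" where
  "pnorm p x = (case p of
      L1 \<Rightarrow> (\<Sum>i\<in>UNIV. \<bar>x $ i\<bar>)
    | L2 \<Rightarrow> norm x
    | Linf \<Rightarrow> Max (range (\<lambda>i. \<bar>x $ i\<bar>)))"

definition pball :: "normkind \<Rightarrow> real \<Rightarrow> real^'n \<Rightarrow> (real^'n) set" where
  "pball p r x = {z. pnorm p (z - x) \<le> r}"

definition is_lattice :: "(real^'n) set \<Rightarrow> bool" where
  "is_lattice L \<longleftrightarrow> (\<exists>b :: 'n \<Rightarrow> real^'n.
      inj b \<and> independent (range b) \<and> span (range b) = UNIV \<and>
      L = {v. \<exists>k :: 'n \<Rightarrow> int. v = (\<Sum>i\<in>UNIV. of_int (k i) *\<^sub>R b i)})"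

definition packing_radius :: "normkind \<Rightarrow> (real^'n) set \<Rightarrow> real" where
  "packing_radius p L = Sup {r. \<forall>x\<in>L. \<forall>y\<in>L. x \<noteq> y \<longrightarrow> pball p r x \<inter> pball p r y = {}}"

definition cover_radius :: "normkind \<Rightarrow> (real^'n) set \<Rightarrow> real" where
  "cover_radius p L = Inf {r. (\<Union>x\<in>L. pball p r x) = UNIV}"

definition eps_lattice :: "normkind \<Rightarrow> real \<Rightarrow> (real^'n) set \<Rightarrow> bool" where
  "eps_lattice p \<epsilon> L \<longleftrightarrow> is_lattice L \<and> \<epsilon> = packing_radius p L \<and>
     packing_radius p L \<le> cover_radius p L \<and> cover_radius p L \<le> 3 * \<epsilon>"

end

theory Submission
  imports Defs
begin

lemma linf_ge: "\<bar>(x::real^'n) $ i\<bar> \<le> Max (range (\<lambda>i. \<bar>x $ i\<bar>))"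
  by (rule Max_ge) auto

lemma linf_le: "(\<And>i. \<bar>(x::real^'n) $ i\<bar> \<le> c) \<Longrightarrow> Max (range (\<lambda>i. \<bar>x $ i\<bar>)) \<le> c"
  by (subst Max_le_iff) auto

lemma pnorm_nonneg: "0 \<le> pnorm p v"
  unfolding pnorm_def
  by (cases p) (auto intro: sum_nonneg order_trans[OF _ linf_ge])

lemma pnorm_triangle: "pnorm p (a + b) \<le> pnorm p a + pnorm p b"
proof (cases p)
  case L1 then show ?thesis unfolding pnorm_def
    by (auto simp: sum.distrib[symmetric] intro!: sum_mono abs_triangle_ineq)
next
  case L2 then show ?thesis unfolding pnorm_def by (simp add: norm_triangle_ineq)
next
  case Linf then show ?thesis unfolding pnorm_def
    apply (simp only: normkind.case)
    apply (rule linf_le)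
    subgoal for i by (rule order_trans[OF _ add_mono[OF linf_ge[of a i] linf_ge[of b i]]]) (simp add: abs_triangle_ineq)
    done
qed

lemma pnorm_scale: "pnorm p (c *\<^sub>R v) \<le> \<bar>c\<bar> * pnorm p v"
proof (cases p)
  case L1 then show ?thesis unfolding pnorm_def
    by (simp add: sum_distrib_left abs_mult)
next
  case L2 then show ?thesis unfolding pnorm_def by simp
next
  case Linf then show ?thesis unfolding pnorm_def
    apply (simp only: normkind.case)
    apply (rule linf_le)
    by (simp add: abs_mult) (rule mult_left_mono[OF linf_ge], simp)
qed

lemma pnorm_zero: "pnorm p (0::real^'n) = 0"
  using pnorm_scale[of p 0 "0::real^'n"] pnorm_nonneg[of p "0::real^'n"] by auto

lemma pnorm_minus: "pnorm p (- v) = pnorm p v"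
  using pnorm_scale[of p "-1" v] pnorm_scale[of p "-1" "-v"] by simp

lemma pnorm_sum: "finite A \<Longrightarrow> pnorm p (sum f A) \<le> (\<Sum>i\<in>A. pnorm p (f i))"
proof (induction A rule: finite_induct)
  case empty then show ?case by (simp add: pnorm_zero)
next
  case (insert a A)
  then show ?case using pnorm_triangle[of p "f a" "sum f A"] by simp
qed

lemma pnorm_bound: "\<exists>K\<ge>0. \<forall>v::real^'n. norm v \<le> K * pnorm p v"
proof (cases p)
  case L1 then show ?thesis unfolding pnorm_def using norm_le_l1_cart
    by (intro exI[of _ 1]) auto
next
  case L2 then show ?thesis unfolding pnorm_def by (intro exI[of _ 1]) auto
next
  case Linf
  show ?thesis
  proof (intro exI[of _ "real CARD('n)"] conjI allI)
    fix v :: "real^'n"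
    have "norm v \<le> (\<Sum>i\<in>UNIV. \<bar>v$i\<bar>)" by (rule norm_le_l1_cart)
    also have "\<dots> \<le> (\<Sum>i\<in>(UNIV::'n set). Max (range (\<lambda>i. \<bar>v $ i\<bar>)))"
      by (rule sum_mono) (rule linf_ge)
    finally show "norm v \<le> real CARD('n) * pnorm p v" using Linf by (simp add: pnorm_def)
  qed auto
qed

lemma lattice_cover:
  assumes "is_lattice (L::(real^'n) set)"
  shows "\<exists>R. \<forall>y. \<exists>z\<in>L. pnorm p (y - z) \<le> R"
proof -
  obtain b :: "'n \<Rightarrow> real^'n" where inj: "inj b" and sp: "span (range b) = UNIV"
    and L: "L = {v. \<exists>k :: 'n \<Rightarrow> int. v = (\<Sum>i\<in>UNIV. of_int (k i) *\<^sub>R b i)}"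
    using assms unfolding is_lattice_def by blast
  show ?thesis
  proof (intro exI allI)
    fix y :: "real^'n"
    have "y \<in> span (range b)" using sp by simp
    then obtain u where u: "y = (\<Sum>v\<in>range b. u v *\<^sub>R v)"
      using span_finite[of "range b"] by auto
    define c where "c i = u (b i)" for i
    have y: "y = (\<Sum>i\<in>UNIV. c i *\<^sub>R b i)"
      unfolding u c_def by (simp add: sum.reindex[OF inj])
    define z where "z = (\<Sum>i\<in>UNIV. of_int \<lfloor>c i\<rfloor> *\<^sub>R b i)"
    have zL: "z \<in> L" unfolding L z_def by (rule CollectI, rule exI[of _ "\<lambda>i. \<lfloor>c i\<rfloor>"]) simp
    have "y - z = (\<Sum>i\<in>UNIV. (c i - of_int \<lfloor>c i\<rfloor>) *\<^sub>R b i)"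
      unfolding y z_def by (simp add: sum_subtractf[symmetric] scaleR_diff_left)
    then have "pnorm p (y - z) \<le> (\<Sum>i\<in>UNIV. pnorm p ((c i - of_int \<lfloor>c i\<rfloor>) *\<^sub>R b i))"
      using pnorm_sum[of "UNIV::'n set" p] by simp
    also have "\<dots> \<le> (\<Sum>i\<in>UNIV. pnorm p (b i))"
    proof (rule sum_mono)
      fix i
      have "pnorm p ((c i - of_int \<lfloor>c i\<rfloor>) *\<^sub>R b i) \<le> \<bar>c i - of_int \<lfloor>c i\<rfloor>\<bar> * pnorm p (b i)"
        by (rule pnorm_scale)
      also have "\<dots> \<le> 1 * pnorm p (b i)"
        by (rule mult_right_mono) (auto simp: pnorm_nonneg, linarith)
      finally show "pnorm p ((c i - of_int \<lfloor>c i\<rfloor>) *\<^sub>R b i) \<le> pnorm p (b i)" by simp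
    qed
    finally show "\<exists>z\<in>L. pnorm p (y - z) \<le> (\<Sum>i\<in>UNIV. pnorm p (b i))" using zL by blast
  qed
qed

theorem lemma13:
  fixes p :: normkind and \<epsilon> :: real and L :: "(real^'n) set" and x :: "real^'n"
  assumes "\<epsilon> > 0" and "eps_lattice p \<epsilon> L"
  shows "x \<in> convex hull (pball p (7 * \<epsilon>) x \<inter> L)"
proof (rule ccontr)
  assume nx: "x \<notin> convex hull (pball p (7 * \<epsilon>) x \<inter> L)"
  define C where "C = convex hull (pball p (7 * \<epsilon>) x \<inter> L)"
  have lat: "is_lattice L" and cr: "cover_radius p L \<le> 3 * \<epsilon>"
    using assms(2) unfolding eps_lattice_def by auto
  obtain R where R: "\<forall>y. \<exists>z\<in>L. pnorm p (y - z) \<le> R" using lattice_cover[OF lat] by blast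
  define F where "F = {r. (\<Union>x\<in>L. pball p r x) = UNIV}"
  have "R \<in> F" unfolding F_def pball_def using R by auto
  then have "F \<noteq> {}" by auto
  moreover have "Inf F < 13/4 * \<epsilon>" using cr assms(1) unfolding cover_radius_def F_def by simp
  ultimately obtain r' where "r' \<in> F" "r' < 13/4 * \<epsilon>" using cInf_lessD by blast
  have cov: "\<exists>z\<in>L. pnorm p (y - z) \<le> 13/4 * \<epsilon>" for y
  proof -
    have "y \<in> (\<Union>x\<in>L. pball p r' x)" using \<open>r' \<in> F\<close> unfolding F_def by auto
    then obtain z where "z \<in> L" "pnorm p (y - z) \<le> r'" unfolding pball_def by auto
    then show ?thesis using \<open>r' < 13/4 * \<epsilon>\<close> by force
  qed
  have "convex ((\<lambda>c. c - x) ` C)" unfolding C_def by simp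
  moreover have "0 \<notin> (\<lambda>c. c - x) ` C" using nx unfolding C_def by auto
  ultimately obtain u where u0: "u \<noteq> 0" and uC: "\<forall>c\<in>(\<lambda>c. c - x) ` C. 0 \<le> inner u c"
    using separating_hyperplane_set_0 by blast
  have sep: "inner u x \<le> inner u c" if "c \<in> C" for c
    using uC that by (auto simp: inner_diff_right)
  obtain K where K0: "K \<ge> 0" and K: "\<forall>v::real^'n. norm v \<le> K * pnorm p v"
    using pnorm_bound[of p] by blast
  define D where "D = {inner u v | v. pnorm p v \<le> 1}"
  have D0: "0 \<in> D" unfolding D_def by (rule CollectI, rule exI[of _ "0::real^'n"]) (simp add: pnorm_zero)
  have Dbdd: "bdd_above D"
  proof (rule bdd_aboveI)
    fix d assume "d \<in> D"
    then obtain v where d: "d = inner u v" and v: "pnorm p v \<le> 1" unfolding D_def by auto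
    have "d \<le> norm u * norm v" unfolding d by (rule order_trans[OF _ Cauchy_Schwarz_ineq2]) simp
    also have "\<dots> \<le> norm u * (K * pnorm p v)" using K by (simp add: mult_left_mono)
    also have "\<dots> \<le> norm u * (K * 1)" using v K0 by (intro mult_left_mono) auto
    finally show "d \<le> norm u * K" by simp
  qed
  define Cs where "Cs = Sup D"
  define v0 where "v0 = (1 / (pnorm p u + 1)) *\<^sub>R u"
  have pu: "pnorm p u \<ge> 0" by (rule pnorm_nonneg)
  have "pnorm p v0 \<le> \<bar>1 / (pnorm p u + 1)\<bar> * pnorm p u" unfolding v0_def by (rule pnorm_scale)
  also have "\<dots> \<le> 1" using pu by (simp add: field_simps)
  finally have "inner u v0 \<in> D" unfolding D_def by blast
  moreover have "inner u v0 > 0" unfolding v0_def using u0 pu by simp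
  ultimately have Cpos: "Cs > 0" unfolding Cs_def using Dbdd cSup_upper[of _ D] by fastforce
  have "13/14 * Cs < Cs" using Cpos by simp
  then obtain d where "d \<in> D" "13/14 * Cs < d" unfolding Cs_def using less_cSup_iff[of D] D0 Dbdd by blast
  then obtain w where w1: "pnorm p w \<le> 1" and uw: "13/14 * Cs < inner u w" unfolding D_def by auto
  define y where "y = x - (7/2 * \<epsilon>) *\<^sub>R w"
  obtain z where zL: "z \<in> L" and zy: "pnorm p (y - z) \<le> 13/4 * \<epsilon>" using cov by blast
  have zy': "pnorm p (z - y) \<le> 13/4 * \<epsilon>" using zy pnorm_minus[of p "y - z"] by simp
  have "pnorm p (z - x) \<le> pnorm p (z - y) + pnorm p (y - x)"
    using pnorm_triangle[of p "z - y" "y - x"] by simp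
  also have "pnorm p (y - x) \<le> \<bar>- (7/2 * \<epsilon>)\<bar> * pnorm p w"
    unfolding y_def using pnorm_scale[of p "- (7/2 * \<epsilon>)" w] by simp
  also have "\<dots> \<le> 7/2 * \<epsilon>" using w1 assms(1) by (simp add: mult_left_le)
  finally have "pnorm p (z - x) \<le> 7 * \<epsilon>" using zy' assms(1) by simp
  then have "z \<in> C" unfolding C_def pball_def using zL by (auto intro: hull_inc)
  then have ux: "inner u x \<le> inner u z" by (rule sep)
  define v where "v = (1 / (13/4 * \<epsilon>)) *\<^sub>R (z - y)"
  have "pnorm p v \<le> \<bar>1 / (13/4 * \<epsilon>)\<bar> * pnorm p (z - y)" unfolding v_def by (rule pnorm_scale)
  also have "\<dots> \<le> \<bar>1 / (13/4 * \<epsilon>)\<bar> * (13/4 * \<epsilon>)" using zy' by (intro mult_left_mono) auto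
  also have "\<dots> = 1" using assms(1) by simp
  finally have "inner u v \<in> D" unfolding D_def by blast
  then have "inner u v \<le> Cs" unfolding Cs_def using Dbdd by (rule cSup_upper)
  moreover have "inner u (z - y) = (13/4 * \<epsilon>) * inner u v"
    unfolding v_def using assms(1) by (simp add: inner_scaleR_right)
  ultimately have "inner u (z - y) \<le> 13/4 * \<epsilon> * Cs" using assms(1) by (simp add: mult_left_mono)
  moreover have "inner u y = inner u x - 7/2 * \<epsilon> * inner u w"
    unfolding y_def by (simp add: inner_diff_right inner_scaleR_right)
  moreover have "7/2 * \<epsilon> * (13/14 * Cs) < 7/2 * \<epsilon> * inner u w" using uw assms(1) by simp
  ultimately have "inner u z < inner u x" by (simp add: inner_diff_right algebra_simps)
  with ux show False by simp
qed

end
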